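(* Let $p\in(0,1)$ and let $(\lambda_n)_{n\ge1}$ be a sequence with $\lambda_1=1$ and $0\le\lambda_n\le\lambda_{n-1}$ for all $n>1$. Let $r_1,r_2,\dots$ be $\{0,1\}$-valued random variables with $\Pr(r_1=1)=p$ and, for every $n\ge2$, $\Pr(r_n=1\mid r_1,\dots,r_{n-1})=\lambda_n p+(1-\lambda_n)\bar p_{n-1}$, where $\bar p_m=\frac1m\sum_{i=1}^m r_i$. For arbitrary (deterministic) values $\hat\lambda_i\in(0,1]$, $i\ge2$, define $\hat r_1=r_1$ and $\hat r_i=\frac{r_i-(1-\hat\lambda_i)\bar p_{i-1}}{\hat\lambda_i}$ for $i\ge2$, and for weights $\omega_1,\dots,\omega_n>0$ define $\hat p_n=\frac{\sum_{i=1}^n\omega_i\hat r_i}{\sum_{i=1}^n\omega_i}$. Then $\mathbb{E}[\hat r_i]=p$ for every $i\ge1$, and consequently $\mathbb{E}[\hat p_n]=p$.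
   Context: $\hat\lambda_i$ is an estimate of $\lambda_i$ (which need not be correct); $\hat r_i$ is the affine correction of the $i$-th rating and $\hat p_n$ the affine (weighted-mean) estimator of $p$. *)

theory Defs
  imports "HOL-Probability.Probability"
begin

definition gen_alg :: "'a measure \<Rightarrow> (nat \<Rightarrow> 'a \<Rightarrow> real) \<Rightarrow> nat \<Rightarrow> 'a measure" where
  "gen_alg M r n = sigma (space M)
     {r i -` A \<inter> space M | i A. i \<in> {1..n} \<and> A \<in> sets borel}"

definition pbar :: "(nat \<Rightarrow> 'a \<Rightarrow> real) \<Rightarrow> nat \<Rightarrow> 'a \<Rightarrow> real" where
  "pbar r m x = (\<Sum>i=1..m. r i x) / real m"

definition rhat :: "(nat \<Rightarrow> 'a \<Rightarrow> real) \<Rightarrow> (nat \<Rightarrow> real) \<Rightarrow> nat \<Rightarrow> 'a \<Rightarrow> real" where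
  "rhat r lh i x = (if i = 1 then r 1 x else (r i x - (1 - lh i) * pbar r (i - 1) x) / lh i)"

definition phat :: "(nat \<Rightarrow> 'a \<Rightarrow> real) \<Rightarrow> (nat \<Rightarrow> real) \<Rightarrow> (nat \<Rightarrow> real) \<Rightarrow> nat \<Rightarrow> 'a \<Rightarrow> real" where
  "phat r lh w n x = (\<Sum>i=1..n. w i * rhat r lh i x) / (\<Sum>i=1..n. w i)"

end

theory Submission
  imports Defs
begin

lemma mean_r:
  fixes M :: "'a measure" and r :: "nat \<Rightarrow> 'a \<Rightarrow> real"
    and p :: real and lam :: "nat \<Rightarrow> real"
  assumes P: "prob_space M"
    and meas: "\<And>i. i \<ge> 1 \<Longrightarrow> r i \<in> borel_measurable M"
    and val: "\<And>i x. i \<ge> 1 \<Longrightarrow> x \<in> space M \<Longrightarrow> r i x \<in> {0, 1}"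
    and m1: "measure M {x \<in> space M. r 1 x = 1} = p"
    and ce: "\<And>k. k \<ge> 2 \<Longrightarrow> AE x in M.
           real_cond_exp M (gen_alg M r (k - 1)) (indicator {y \<in> space M. r k y = 1}) x
             = lam k * p + (1 - lam k) * pbar r (k - 1) x"
  shows "k \<ge> 1 \<Longrightarrow> integrable M (r k) \<and> (\<integral>x. r k x \<partial>M) = p"
proof (induction k rule: less_induct)
  case (less k)
  interpret prob_space M by (rule P)
  have int: "integrable M (r k)"
  proof (rule integrable_const_bound[where B=1])
    show "AE x in M. norm (r k x) \<le> 1" using val[OF less.prems] by (intro AE_I2) fastforce
  qed (rule meas[OF less.prems])
  have setm: "{y \<in> space M. r k y = 1} \<in> sets M"
    using meas[OF less.prems] by measurable
  have ind: "(\<integral>x. r k x \<partial>M) = (\<integral>x. indicator {y \<in> space M. r k y = 1} x \<partial>M)"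
  proof (rule Bochner_Integration.integral_cong[OF refl])
    fix x assume "x \<in> space M"
    then show "r k x = indicator {y \<in> space M. r k y = 1} x"
      using val[OF less.prems] by (auto simp: indicator_def)
  qed
  also have "\<dots> = measure M {y \<in> space M. r k y = 1}"
    using setm by simp
  finally have ind2: "(\<integral>x. r k x \<partial>M) = measure M {y \<in> space M. r k y = 1}" .
  show ?case
  proof (cases "k = 1")
    case True
    then show ?thesis using int ind2 m1 by simp
  next
    case False
    then have k2: "k \<ge> 2" using less.prems by simp
    let ?F = "gen_alg M r (k - 1)"
    have G: "{r i -` A \<inter> space M | i A. i \<in> {1..k-1} \<and> A \<in> sets borel} \<subseteq> sets M"
      using meas by (auto simp: measurable_sets)
    have sub: "subalgebra M ?F"
      unfolding subalgebra_def gen_alg_def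
      using G sets.sets_into_space
      by (auto simp: space_measure_of_conv sets_measure_of_conv intro!: sets.sigma_sets_subset)
    interpret finite_measure_subalgebra M ?F
      by unfold_locales (rule sub)
    have intind: "integrable M (indicator {y \<in> space M. r k y = 1} :: 'a \<Rightarrow> real)"
      using setm by (intro integrable_const_bound[where B=1]) (auto intro!: AE_I2 simp: indicator_def)
    have IH: "\<And>i. i \<in> {1..k-1} \<Longrightarrow> integrable M (r i) \<and> (\<integral>x. r i x \<partial>M) = p"
      using less.IH by auto
    have pint: "(\<integral>x. pbar r (k-1) x \<partial>M) = p"
    proof -
      have "(\<integral>x. pbar r (k-1) x \<partial>M) = (\<Sum>i=1..k-1. (\<integral>x. r i x \<partial>M)) / real (k-1)"
        unfolding pbar_def using IH by (simp add: integral_sum)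
      also have "\<dots> = (\<Sum>i=1..k-1. p) / real (k-1)"
        using IH by simp
      also have "\<dots> = p" using k2 by simp
      finally show ?thesis .
    qed
    have pbint: "integrable M (pbar r (k-1))"
      unfolding pbar_def by (intro integrable_divide_zero integrable_sum) (use IH in auto)
    have "measure M {y \<in> space M. r k y = 1}
        = (\<integral>x. real_cond_exp M ?F (indicator {y \<in> space M. r k y = 1}) x \<partial>M)"
      using real_cond_exp_int(2)[OF intind] setm by simp
    also have "\<dots> = (\<integral>x. lam k * p + (1 - lam k) * pbar r (k - 1) x \<partial>M)"
      by (rule integral_cong_AE) (use ce[OF k2] borel_measurable_integrable[OF pbint] in auto)
    also have "\<dots> = lam k * p + (1 - lam k) * p"
      using pbint pint by (simp add: prob_space)
    also have "\<dots> = p" by (simp add: algebra_simps)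
    finally show ?thesis using int ind2 by simp
  qed
qed

theorem theoremA9:
  fixes M :: "'a measure" and r :: "nat \<Rightarrow> 'a \<Rightarrow> real"
    and p :: real and lam lh w :: "nat \<Rightarrow> real" and n :: nat
  assumes "prob_space M"
    and "0 < p" "p < 1"
    and "lam 1 = 1"
    and "\<And>k. k > 1 \<Longrightarrow> 0 \<le> lam k \<and> lam k \<le> lam (k - 1)"
    and "\<And>i. i \<ge> 1 \<Longrightarrow> r i \<in> borel_measurable M"
    and "\<And>i x. i \<ge> 1 \<Longrightarrow> x \<in> space M \<Longrightarrow> r i x \<in> {0, 1}"
    and "measure M {x \<in> space M. r 1 x = 1} = p"
    and "\<And>k. k \<ge> 2 \<Longrightarrow> AE x in M.
           real_cond_exp M (gen_alg M r (k - 1)) (indicator {y \<in> space M. r k y = 1}) x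
             = lam k * p + (1 - lam k) * pbar r (k - 1) x"
    and "\<And>i. i \<ge> 2 \<Longrightarrow> 0 < lh i \<and> lh i \<le> 1"
    and "n \<ge> 1"
    and "\<And>i. i \<in> {1..n} \<Longrightarrow> w i > 0"
  shows "(\<forall>i\<ge>1. (\<integral>x. rhat r lh i x \<partial>M) = p) \<and> (\<integral>x. phat r lh w n x \<partial>M) = p"
proof -
  interpret prob_space M by (rule assms(1))
  have R: "\<And>k. k \<ge> 1 \<Longrightarrow> integrable M (r k) \<and> (\<integral>x. r k x \<partial>M) = p"
    using mean_r[OF assms(1) assms(6) assms(7) assms(8) assms(9)] by blast
  have PB: "\<And>m. m \<ge> 1 \<Longrightarrow> integrable M (pbar r m) \<and> (\<integral>x. pbar r m x \<partial>M) = p"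
  proof -
    fix m :: nat assume m: "m \<ge> 1"
    have "(\<integral>x. pbar r m x \<partial>M) = (\<Sum>i=1..m. (\<integral>x. r i x \<partial>M)) / real m"
      unfolding pbar_def using R by (simp add: integral_sum)
    also have "\<dots> = p" using R m by simp
    finally show "integrable M (pbar r m) \<and> (\<integral>x. pbar r m x \<partial>M) = p"
      unfolding pbar_def using R by (auto intro!: integrable_divide_zero integrable_sum R[THEN conjunct1])
  qed
  have RH: "\<And>i. i \<ge> 1 \<Longrightarrow> integrable M (rhat r lh i) \<and> (\<integral>x. rhat r lh i x \<partial>M) = p"
  proof -
    fix i :: nat assume i: "i \<ge> 1"
    show "integrable M (rhat r lh i) \<and> (\<integral>x. rhat r lh i x \<partial>M) = p"
    proof (cases "i = 1")
      case True
      have "rhat r lh i = r 1" using True by (auto simp: rhat_def)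
      then show ?thesis using R[of 1] by simp
    next
      case False
      then have i2: "i \<ge> 2" "i - 1 \<ge> 1" using i by auto
      have eq: "rhat r lh i = (\<lambda>x. (r i x - (1 - lh i) * pbar r (i - 1) x) / lh i)"
        using False by (auto simp: rhat_def)
      have lp: "lh i > 0" using assms(10)[OF i2(1)] by simp
      have "(\<integral>x. (r i x - (1 - lh i) * pbar r (i - 1) x) / lh i \<partial>M)
           = (p - (1 - lh i) * p) / lh i"
        using R[OF i] PB[OF i2(2)] by simp
      also have "\<dots> = p" using lp by (simp add: field_simps)
      finally show ?thesis unfolding eq using R[OF i] PB[OF i2(2)] by simp
    qed
  qed
  have wpos: "(\<Sum>i=1..n. w i) > 0"
    using assms(11,12) by (intro sum_pos) auto
  have "(\<integral>x. phat r lh w n x \<partial>M) = (\<Sum>i=1..n. w i * (\<integral>x. rhat r lh i x \<partial>M)) / (\<Sum>i=1..n. w i)"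
    unfolding phat_def using RH by (simp add: integral_sum)
  also have "\<dots> = (\<Sum>i=1..n. w i * p) / (\<Sum>i=1..n. w i)"
    using RH by simp
  also have "\<dots> = p" using wpos by (simp add: sum_distrib_right[symmetric])
  finally show ?thesis using RH by simp
qed

end
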